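(* Assume: - the strengthened triangle inequality under the square holds with constant $a_0$; - the forms $\overline a_{l,i}$ provide a positive semi-definite splitting with constant $b_0$; - the subspaces are locally stable with constant $C_1$. Let $v_h\in V_h$ and define recursively $v_L=v_h$. For $l=L,L-1,\dots,1$, let $v_l=v_{l-1}+\sum_{i=1}^{P_l}v_{l,i}$ be a decomposition of $v_l\in V_{h,l}$ as in the definition of local stability. This yields $v_h=v_0+\sum_{l=1}^L\sum_{i=1}^{P_l}v_{l,i}$ with $v_0\in V_{h,0}$. Then, with $C=2(1+a_0b_0C_1)$, $$\|v_0\|_{a_h}^2+\sum_{l=1}^L\sum_{i=1}^{P_l}\|v_{l,i}\|_{a_h}^2\le C^L\Bigl(1+\frac{b_0C_1}{C-1}\Bigr)\|v_h\|_{a_h}^2.$$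
   Context: Let $V_h$ be a finite-dimensional real vector space with a symmetric positive definite bilinear form $a_h$, and $\|v\|_{a_h}=\sqrt{a_h(v,v)}$. Let $L\ge1$ and let $V_{h,0}\subseteq V_{h,1}\subseteq\cdots\subseteq V_{h,L}=V_h$ be nested subspaces. For each level $1\le l\le L$ let $P_l\in\mathbb N$ and let $V_{h,l,i}\subseteq V_{h,l}$, $i=1,\dots,P_l$, be subspaces. For each such $(l,i)$ let $\overline V_{h,l,i}$ be a finite-dimensional real vector space, $r_{l,i}:V_{h,l}\to\overline V_{h,l,i}$ a linear map, and $\overline a_{l,i}$ a symmetric positive semi-definite bilinear form on $\overline V_{h,l,i}$ with seminorm $|w|_{\overline a_{l,i}}=\sqrt{\overline a_{l,i}(w,w)}$. Strengthened triangle inequality under the square with constant $a_0>0$: for every $1\le l\le L$ and every choice of $v_{l,i}\in V_{h,l,i}$, $$\Bigl\|\sum_{i=1}^{P_l}v_{l,i}\Bigr\|_{a_h}^2\le a_0\sum_{i=1}^{P_l}\|v_{l,i}\|_{a_h}^2.$$ Positive semi-definite splitting with constant $b_0>0$: for every $1\le l\le L$ and all $v_l\in V_{h,l}$, $$\sum_{i=1}^{P_l}|r_{l,i}v_l|_{\overline a_{l,i}}^2\le b_0\|v_l\|_{a_h}^2.$$ Local stability with constant $C_1>0$: for every $1\le l\le L$ and every $v_l\in V_{h,l}$ there is a decomposition $v_l=v_{l-1}+\sum_{i=1}^{P_l}v_{l,i}$ with $v_{l-1}\in V_{h,l-1}$ and $v_{l,i}\in V_{h,l,i}$ such that $$\|v_{l,i}\|_{a_h}^2\le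 C_1|r_{l,i}v_l|_{\overline a_{l,i}}^2\quad\text{for all }1\le i\le P_l.$$ The constants $a_0,b_0,C_1$ are independent of $l$. *)

theory Defs
  imports "HOL-Analysis.Analysis"
begin

definition sqn :: "('a \<Rightarrow> 'a \<Rightarrow> real) \<Rightarrow> 'a \<Rightarrow> real" where
  "sqn b v = b v v"

definition spd_form :: "('a::real_vector \<Rightarrow> 'a \<Rightarrow> real) \<Rightarrow> bool" where
  "spd_form b \<longleftrightarrow> bilinear b \<and> (\<forall>x y. b x y = b y x) \<and> (\<forall>x. x \<noteq> 0 \<longrightarrow> b x x > 0)"

definition spsd_form :: "('a::real_vector \<Rightarrow> 'a \<Rightarrow> real) \<Rightarrow> bool" where
  "spsd_form b \<longleftrightarrow> bilinear b \<and> (\<forall>x y. b x y = b y x) \<and> (\<forall>x. b x x \<ge> 0)"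

definition linear_on_sub :: "'a::real_vector set \<Rightarrow> ('a \<Rightarrow> 'b::real_vector) \<Rightarrow> bool" where
  "linear_on_sub S f \<longleftrightarrow> (\<forall>x\<in>S. \<forall>y\<in>S. f (x + y) = f x + f y) \<and> (\<forall>c. \<forall>x\<in>S. f (c *\<^sub>R x) = c *\<^sub>R f x)"

end

theory Submission
  imports Defs
begin

theorem lemma3p10:
  fixes a :: "'v::euclidean_space \<Rightarrow> 'v \<Rightarrow> real"
    and L :: nat and V :: "nat \<Rightarrow> 'v set" and P :: "nat \<Rightarrow> nat"
    and W :: "nat \<Rightarrow> nat \<Rightarrow> 'v set"
    and r :: "nat \<Rightarrow> nat \<Rightarrow> 'v \<Rightarrow> 'w::euclidean_space"
    and abar :: "nat \<Rightarrow> nat \<Rightarrow> 'w \<Rightarrow> 'w \<Rightarrow> real"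
    and a0 b0 C1 :: real
    and vh :: 'v and v :: "nat \<Rightarrow> 'v" and vd :: "nat \<Rightarrow> nat \<Rightarrow> 'v"
  assumes a_spd: "spd_form a"
    and L_pos: "L \<ge> 1"
    and V_sub: "\<And>l. l \<le> L \<Longrightarrow> subspace (V l)"
    and V_nested: "\<And>l. l < L \<Longrightarrow> V l \<subseteq> V (Suc l)"
    and V_top: "V L = UNIV"
    and P_pos: "\<And>l. 1 \<le> l \<Longrightarrow> l \<le> L \<Longrightarrow> P l \<ge> 1"
    and W_sub: "\<And>l i. 1 \<le> l \<Longrightarrow> l \<le> L \<Longrightarrow> 1 \<le> i \<Longrightarrow> i \<le> P l \<Longrightarrow>
                  subspace (W l i) \<and> W l i \<subseteq> V l"
    and r_lin: "\<And>l i. 1 \<le> l \<Longrightarrow> l \<le> L \<Longrightarrow> 1 \<le> i \<Longrightarrow> i \<le> P l \<Longrightarrow>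
                  linear_on_sub (V l) (r l i)"
    and abar_psd: "\<And>l i. 1 \<le> l \<Longrightarrow> l \<le> L \<Longrightarrow> 1 \<le> i \<Longrightarrow> i \<le> P l \<Longrightarrow>
                  spsd_form (abar l i)"
    and a0_pos: "a0 > 0" and b0_pos: "b0 > 0" and C1_pos: "C1 > 0"
    and STI: "\<And>l w. 1 \<le> l \<Longrightarrow> l \<le> L \<Longrightarrow> (\<forall>i\<in>{1..P l}. w i \<in> W l i) \<Longrightarrow>
                sqn a (\<Sum>i=1..P l. w i) \<le> a0 * (\<Sum>i=1..P l. sqn a (w i))"
    and PSD_split: "\<And>l x. 1 \<le> l \<Longrightarrow> l \<le> L \<Longrightarrow> x \<in> V l \<Longrightarrow>
                (\<Sum>i=1..P l. sqn (abar l i) (r l i x)) \<le> b0 * sqn a x"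
    and loc_stab: "\<And>l x. 1 \<le> l \<Longrightarrow> l \<le> L \<Longrightarrow> x \<in> V l \<Longrightarrow>
                \<exists>y w. y \<in> V (l - 1) \<and> (\<forall>i\<in>{1..P l}. w i \<in> W l i) \<and>
                   x = y + (\<Sum>i=1..P l. w i) \<and>
                   (\<forall>i\<in>{1..P l}. sqn a (w i) \<le> C1 * sqn (abar l i) (r l i x))"
    and v_top: "v L = vh"
    and v_dec: "\<And>l. 1 \<le> l \<Longrightarrow> l \<le> L \<Longrightarrow>
                v (l - 1) \<in> V (l - 1) \<and> (\<forall>i\<in>{1..P l}. vd l i \<in> W l i) \<and>
                v l = v (l - 1) + (\<Sum>i=1..P l. vd l i) \<and>
                (\<forall>i\<in>{1..P l}. sqn a (vd l i) \<le> C1 * sqn (abar l i) (r l i (v l)))"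
  shows "let C = 2 * (1 + a0 * b0 * C1) in
         sqn a (v 0) + (\<Sum>l=1..L. \<Sum>i=1..P l. sqn a (vd l i))
           \<le> C ^ L * (1 + b0 * C1 / (C - 1)) * sqn a vh"
proof -
  define N where "N = sqn a"
  define C where "C = 2 * (1 + a0 * b0 * C1)"
  have bil: "bilinear a" and sym: "\<And>x y. a x y = a y x" and pos: "\<And>x. x \<noteq> 0 \<Longrightarrow> a x x > 0"
    using a_spd unfolding spd_form_def by auto
  have Nnn: "N x \<ge> 0" for x
  proof (cases "x = 0")
    case True thus ?thesis using bilinear_lzero[OF bil] by (simp add: N_def sqn_def)
  next
    case False thus ?thesis using pos[of x] by (simp add: N_def sqn_def)
  qed
  have par: "N (x - y) \<le> 2 * N x + 2 * N y" for x y
  proof -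
    have e1: "N (x - y) = a x x - a x y - a y x + a y y"
      by (simp add: N_def sqn_def bilinear_lsub[OF bil] bilinear_rsub[OF bil])
    have e2: "N (x + y) = a x x + a x y + a y x + a y y"
      by (simp add: N_def sqn_def bilinear_ladd[OF bil] bilinear_radd[OF bil])
    have "N (x + y) \<ge> 0" by (rule Nnn)
    thus ?thesis using e1 e2 by (simp add: N_def sqn_def)
  qed
  have Cgt: "C > 2" unfolding C_def using a0_pos b0_pos C1_pos by (simp add: mult_pos_pos)
  have inV: "v l \<in> V l" if "1 \<le> l" "l \<le> L" for l
  proof (cases "l = L")
    case True thus ?thesis using V_top by simp
  next
    case False
    hence "1 \<le> Suc l" "Suc l \<le> L" using that by auto
    from v_dec[OF this] show ?thesis by simp
  qed
  have D: "(\<Sum>i=1..P l. N (vd l i)) \<le> b0 * C1 * N (v l)" if l: "1 \<le> l" "l \<le> L" for l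
  proof -
    have "(\<Sum>i=1..P l. N (vd l i)) \<le> (\<Sum>i=1..P l. C1 * sqn (abar l i) (r l i (v l)))"
      using v_dec[OF l] by (intro sum_mono) (auto simp: N_def)
    also have "\<dots> = C1 * (\<Sum>i=1..P l. sqn (abar l i) (r l i (v l)))" by (simp add: sum_distrib_left)
    also have "\<dots> \<le> C1 * (b0 * N (v l))"
      using PSD_split[OF l inV[OF l]] C1_pos by (simp add: N_def)
    finally show ?thesis by (simp add: algebra_simps)
  qed
  have R: "N (v (l - 1)) \<le> C * N (v l)" if l: "1 \<le> l" "l \<le> L" for l
  proof -
    have dec: "v (l - 1) = v l - (\<Sum>i=1..P l. vd l i)" using v_dec[OF l] by simp
    have "N (\<Sum>i=1..P l. vd l i) \<le> a0 * (\<Sum>i=1..P l. N (vd l i))"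
      using STI[OF l] v_dec[OF l] by (simp add: N_def)
    also have "\<dots> \<le> a0 * (b0 * C1 * N (v l))" using D[OF l] a0_pos by simp
    finally have s: "N (\<Sum>i=1..P l. vd l i) \<le> a0 * (b0 * C1 * N (v l))" .
    have "N (v (l - 1)) \<le> 2 * N (v l) + 2 * N (\<Sum>i=1..P l. vd l i)" unfolding dec by (rule par)
    also have "\<dots> \<le> 2 * N (v l) + 2 * (a0 * (b0 * C1 * N (v l)))" using s by simp
    also have "\<dots> = C * N (v l)" by (simp add: C_def algebra_simps)
    finally show ?thesis .
  qed
  define K where "K l = C ^ l + b0 * C1 * (C ^ l - 1) / (C - 1)" for l :: nat
  have Kstep: "K l * C + b0 * C1 = K (Suc l)" for l
    using Cgt by (simp add: K_def field_simps)
  have Kpos: "K l \<ge> 0" for l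
  proof -
    have "C ^ l \<ge> 1" using Cgt by (simp add: one_le_power)
    thus ?thesis using Cgt b0_pos C1_pos unfolding K_def by (simp add: mult_pos_pos)
  qed
  have main: "l \<le> L \<Longrightarrow> N (v 0) + (\<Sum>j=1..l. \<Sum>i=1..P j. N (vd j i)) \<le> K l * N (v l)" for l
  proof (induction l)
    case 0 thus ?case by (simp add: K_def)
  next
    case (Suc l)
    have l: "1 \<le> Suc l" "Suc l \<le> L" using Suc by auto
    have "N (v 0) + (\<Sum>j=1..Suc l. \<Sum>i=1..P j. N (vd j i))
        = (N (v 0) + (\<Sum>j=1..l. \<Sum>i=1..P j. N (vd j i))) + (\<Sum>i=1..P (Suc l). N (vd (Suc l) i))"
      by simp
    also have "\<dots> \<le> K l * N (v l) + b0 * C1 * N (v (Suc l))"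
      using Suc D[OF l] by simp
    also have "K l * N (v l) \<le> K l * (C * N (v (Suc l)))"
      using R[OF l] Kpos[of l] by (simp add: mult_left_mono)
    hence "K l * N (v l) + b0 * C1 * N (v (Suc l)) \<le> (K l * C + b0 * C1) * N (v (Suc l))"
      by (simp add: algebra_simps)
    finally show ?case by (simp add: Kstep)
  qed
  have fin: "K L \<le> C ^ L * (1 + b0 * C1 / (C - 1))"
    using Cgt b0_pos C1_pos by (simp add: K_def field_simps)
  have "N (v 0) + (\<Sum>l=1..L. \<Sum>i=1..P l. N (vd l i)) \<le> K L * N vh"
    using main[of L] v_top by simp
  also have "\<dots> \<le> C ^ L * (1 + b0 * C1 / (C - 1)) * N vh"
    using fin Nnn[of vh] by (simp add: mult_right_mono)
  finally show ?thesis unfolding Let_def C_def N_def .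
qed

end
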